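(* For all integers $N>r\ge 0$, the $N\times N$ discrete Fourier transform matrix $F_N$ satisfies $(r+1)\cdot\big(r+\mathcal{R}_{F_N}(r)/N\big)\ge N$, where rigidity is over $\mathbb{C}$.
   Context: $F_N\in\mathbb{C}^{N\times N}$ has entries $F_N[i,j]=\omega_N^{ij}$ for $i,j\in\{0,\dots,N-1\}$, with $\omega_N=e^{2\pi i/N}$. $\mathcal{R}_A(r)=\min\{\mathrm{nnz}(B):\mathrm{rank}(A+B)\le r\}$ is the rank-$r$ rigidity. *)

theory Defs
  imports "HOL-Analysis.Analysis" "Jordan_Normal_Form.DL_Rank"
begin

definition dft_mat :: "nat \<Rightarrow> complex mat" where
  "dft_mat N = mat N N (\<lambda>(i, j). exp (2 * pi * \<i> / of_nat N) ^ (i * j))"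

definition nnz :: "'a::zero mat \<Rightarrow> nat" where
  "nnz B = card {(i, j). i < dim_row B \<and> j < dim_col B \<and> B $$ (i, j) \<noteq> 0}"

definition rigidity :: "complex mat \<Rightarrow> nat \<Rightarrow> nat" where
  "rigidity A r = (LEAST k. \<exists>B \<in> carrier_mat (dim_row A) (dim_col A).
      nnz B = k \<and> vec_space.rank (dim_row A) (A + B) \<le> r)"

end

theory Submission imports Defs "Jordan_Normal_Form.DL_Rank_Submatrix" begin

lemma omega_pow_inj:
  assumes "i < N" "k < N" "exp (2*pi*\<i>/of_nat N)^i = exp (2*pi*\<i>/of_nat N)^k"
  shows "i = k"
proof -
  have N: "N > 0" using assms by auto
  have "exp (of_nat i * (2*pi*\<i>/of_nat N)) = exp (of_nat k * (2*pi*\<i>/of_nat N))"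
    using assms(3) by (simp only: exp_of_nat_mult)
  then obtain n :: int where n: "of_nat i * (2*pi*\<i>/of_nat N) = of_nat k * (2*pi*\<i>/of_nat N) + (of_int (2 * n) * pi) * \<i>"
    unfolding exp_eq by blast
  have "(of_nat i :: complex) = of_nat k + of_int n * of_nat N"
  proof -
    have h: "(of_nat i - (of_nat k + of_int n * of_nat N)) * (2*pi*\<i>/of_nat N) = (0::complex)"
      using n N by (simp add: field_simps)
    have "(2*pi*\<i>/of_nat N) \<noteq> (0::complex)" using N by simp
    with h show ?thesis by simp
  qed
  then have "(of_int (int i) :: complex) = of_int (int k + n * int N)" by simp
  then have e: "int i = int k + n * int N" using of_int_eq_iff by blast
  show ?thesis
  proof (cases "n = 0")
    case True then show ?thesis using e by simp
  next
    case False
    then have "n \<ge> 1 \<or> n \<le> -1" by auto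
    then show ?thesis
    proof
      assume "n \<ge> 1" then have "n * int N \<ge> int N" using N by (simp add: mult_le_cancel_right1)
      then show ?thesis using e assms by linarith
    next
      assume "n \<le> -1" then have "n * int N \<le> - int N" using N
        by (metis mult_minus_left mult_right_mono of_nat_0_le_iff mult_1)
      then show ?thesis using e assms by linarith
    qed
  qed
qed


lemma rank_block:
  fixes M :: "complex mat"
  assumes M: "M \<in> carrier_mat N N" and j: "j0 + r + 1 \<le> N"
  and G: "G \<subseteq> {..<N}" "r + 1 \<le> card G"
  and ent: "\<And>i b. i \<in> G \<Longrightarrow> b \<le> r \<Longrightarrow> M $$ (i, j0+b) = exp (2*pi*\<i>/of_nat N)^(i*(j0+b))"
  shows "r + 1 \<le> vec_space.rank N M"
proof -
  interpret vec_space "TYPE(complex)" N .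
  define w where "w = exp (2*pi*\<i>/of_nat N :: complex)"
  have w0: "w \<noteq> 0" unfolding w_def by simp
  define C where "C = mat N (r+1) (\<lambda>(i,b). M $$ (i, j0+b))"
  have C: "C \<in> carrier_mat N (r+1)" unfolding C_def by simp
  have Cv: "(C *\<^sub>v v) $ i = (\<Sum>b\<in>{0..<r+1}. M $$ (i, j0+b) * v $ b)"
    if "i < N" "v \<in> carrier_vec (r+1)" for i v
    using that unfolding C_def by (simp add: scalar_prod_def)
  have ker: "v = 0\<^sub>v (r+1)" if v: "v \<in> carrier_vec (r+1)" and z: "C *\<^sub>v v = 0\<^sub>v N" for v
  proof -
    define p where "p = (\<Sum>b\<in>{0..<r+1}. monom (v$b) b)"
    have coeffp: "coeff p c = (if c < r+1 then v$c else 0)" for c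
      unfolding p_def by (simp add: coeff_sum coeff_monom)
    have deg: "degree p \<le> r"
      by (rule degree_le) (simp add: coeffp)
    have roots: "poly p (w^i) = 0" if i: "i \<in> G" for i
    proof -
      have iN: "i < N" using i G by auto
      have "0 = (C *\<^sub>v v) $ i" using z iN by simp
      also have "\<dots> = (\<Sum>b\<in>{0..<r+1}. w^(i*(j0+b)) * v $ b)"
        using Cv[OF iN v] ent[OF i] unfolding w_def by simp
      also have "\<dots> = w^(i*j0) * (\<Sum>b\<in>{0..<r+1}. v $ b * (w^i)^b)"
        unfolding sum_distrib_left by (rule sum.cong) (simp_all add: distrib_left power_add mult.commute flip: power_mult)
      also have "(\<Sum>b\<in>{0..<r+1}. v $ b * (w^i)^b) = poly p (w^i)"
        unfolding p_def by (simp add: poly_sum poly_monom)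
      finally show ?thesis using w0 by simp
    qed
    have "p = 0"
    proof (rule ccontr)
      assume p: "p \<noteq> 0"
      have "(\<lambda>i. w^i) ` G \<subseteq> {x. poly p x = 0}" using roots by auto
      moreover have "inj_on (\<lambda>i. w^i) G"
        using G omega_pow_inj unfolding w_def inj_on_def by blast
      moreover have "finite G" using G finite_subset by blast
      ultimately have "card G \<le> card {x. poly p x = 0}"
        using card_mono[OF poly_roots_finite[OF p]] card_image by metis
      also have "\<dots> \<le> degree p" by (rule card_poly_roots_bound[OF p])
      finally show False using deg G by simp
    qed
    show ?thesis
    proof (rule eq_vecI)
      show "dim_vec v = dim_vec (0\<^sub>v (r + 1))" using v by simp
      fix c assume "c < dim_vec (0\<^sub>v (r + 1))"
      then have "c < r+1" by simp
      then show "v $ c = 0\<^sub>v (r + 1) $ c" using coeffp[of c] \<open>p = 0\<close> by simp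
    qed
  qed
  have dist: "distinct (cols C)"
  proof (rule ccontr)
    assume "\<not> distinct (cols C)"
    then obtain a b where ab: "a < r+1" "b < r+1" "a \<noteq> b" "cols C ! a = cols C ! b"
      using C distinct_conv_nth[of "cols C"] by auto
    define v where "v = vec (r+1) (\<lambda>c. if c = a then 1 else if c = b then -1 else (0::complex))"
    have v: "v \<in> carrier_vec (r+1)" unfolding v_def by simp
    have "C *\<^sub>v v = 0\<^sub>v N"
    proof (rule eq_vecI)
      show "dim_vec (C *\<^sub>v v) = dim_vec (0\<^sub>v N)" using C by simp
      fix i assume "i < dim_vec (0\<^sub>v N)"
      then have i: "i < N" by simp
      have colsEq: "C $$ (i,a) = C $$ (i,b)"
      proof -
        have "col C a $ i = col C b $ i" using ab C by (simp add: cols_nth)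
        then show ?thesis using ab C i by simp
      qed
      have "(C *\<^sub>v v) $ i = (\<Sum>c\<in>{0..<r+1}. C $$ (i,c) * v $ c)"
        using i C v by (simp add: scalar_prod_def)
      also have "\<dots> = (\<Sum>c\<in>{0..<r+1}. (if c = a then C $$ (i,a) else 0) - (if c = b then C $$ (i,b) else 0))"
        by (rule sum.cong) (auto simp: v_def ab)
      also have "\<dots> = C $$ (i,a) - C $$ (i,b)"
        using ab by (simp add: sum_subtractf)
      finally show "(C *\<^sub>v v) $ i = 0\<^sub>v N $ i" using colsEq i by simp
    qed
    moreover have "v \<noteq> 0\<^sub>v (r+1)"
    proof
      assume "v = 0\<^sub>v (r+1)"
      then have "v $ a = 0" using ab by simp
      then show False using ab by (simp add: v_def)
    qed
    ultimately show False using ker v by blast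
  qed
  have indpt: "lin_indpt (set (cols C))"
  proof
    assume "lin_dep (set (cols C))"
    then obtain v where "v \<in> carrier_vec (r+1)" "v \<noteq> 0\<^sub>v (r+1)" "C *\<^sub>v v = 0\<^sub>v N"
      using lin_depE[OF C _ dist] by blast
    then show False using ker by blast
  qed
  have sub: "set (cols C) \<subseteq> set (cols M)"
  proof
    fix x assume "x \<in> set (cols C)"
    then obtain b where b: "b < r+1" "x = cols C ! b" using C by (auto simp: in_set_conv_nth)
    have "x = col M (j0+b)"
      unfolding b(2) using b(1) C M j by (auto simp: cols_nth C_def intro!: eq_vecI)
    moreover have "j0 + b < N" using b j by simp
    ultimately show "x \<in> set (cols M)" using M by (auto simp: in_set_conv_nth cols_nth intro!: exI[of _ "j0+b"])
  qed
  have "card (set (cols C)) \<le> rank M" by (rule rank_ge_card_indpt[OF M sub indpt])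
  moreover have "card (set (cols C)) = r+1" using distinct_card[OF dist] C by simp
  ultimately show ?thesis by simp
qed


lemma arith_final:
  fixes N r k :: nat
  assumes "r < N" "k \<ge> (N div (r+1)) * (N - r)"
  shows "(real r + 1) * (real r + real k / real N) \<ge> real N"
proof -
  define q where "q = N div (r+1)"
  define s where "s = N mod (r+1)"
  have Ne: "N = q*(r+1) + s" unfolding q_def s_def by (metis div_mult_mod_eq)
  have s: "s \<le> r" unfolding s_def using mod_less_divisor[of "r+1" N] by linarith
  have N0: "real N > 0" using assms by simp
  have Ne': "real N = real q * (real r + 1) + real s" using Ne by (simp add: algebra_simps)
  have k: "real k \<ge> real q * (real N - real r)"
  proof -
    have "real k \<ge> real (q * (N - r))" using assms(2) unfolding q_def by (simp only: of_nat_le_iff)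
    then show ?thesis using assms(1) by (simp add: of_nat_diff)
  qed
  have key: "real r * (real r + 1) * (real N - real q) \<ge> real s * real N"
  proof (cases "r = 0")
    case True then show ?thesis using s by simp
  next
    case False
    then have r1: "real r \<ge> 1" by simp
    have qle: "real q * (real r + 1) \<le> real N" using Ne' by simp
    have "(real r + 1) * (real N - real q) \<ge> real r * real N"
      using qle by (simp add: algebra_simps)
    moreover have "real r * real N \<ge> real N" using r1 N0 by simp
    ultimately have a: "(real r + 1) * (real N - real q) \<ge> real N" by linarith
    have "real r * ((real r + 1) * (real N - real q)) \<ge> real r * real N"
      using a by (intro mult_left_mono) auto
    moreover have "real r * real N \<ge> real s * real N" using s N0 by (intro mult_right_mono) auto
    ultimately show ?thesis by (simp add: mult.assoc)
  qed
  have "(real r + 1) * (real r * real N + real k) \<ge> (real r + 1) * (real r * real N + real q * (real N - real r))"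
    using k by (intro mult_left_mono) auto
  moreover have "(real r + 1) * (real r * real N + real q * (real N - real r)) - real N * real N
       = real r*(real r+1)*(real N - real q) - real s * real N"
  proof -
    have "real N * real N = real N * (real q * (real r + 1) + real s)" using Ne' by simp
    then show ?thesis by (simp add: algebra_simps)
  qed
  ultimately have "real N * real N \<le> (real r + 1) * (real r * real N + real k)" using key by linarith
  then show ?thesis using N0 by (simp add: field_simps)
qed

lemma nnz_bound:
  fixes B :: "complex mat"
  assumes B: "B \<in> carrier_mat N N" and rk: "vec_space.rank N (dft_mat N + B) \<le> r"
  shows "(N div (r+1)) * (N - r) \<le> nnz B"
proof -
  define q where "q = N div (r+1)"
  define S where "S = {(i, j). i < N \<and> j < N \<and> B $$ (i, j) \<noteq> 0}"
  have nnzS: "nnz B = card S" unfolding nnz_def S_def using B by simp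
  have finS: "finite S" unfolding S_def
    by (rule finite_subset[of _ "{..<N} \<times> {..<N}"]) auto
  define T where "T t = {(i,j) \<in> S. t*(r+1) \<le> j \<and> j < t*(r+1) + (r+1)}" for t
  define Z where "Z t = {i. i < N \<and> (\<forall>b\<le>r. B $$ (i, t*(r+1)+b) = 0)}" for t
  have FB: "dft_mat N + B \<in> carrier_mat N N" using B by (simp add: dft_mat_def)
  have Zcard: "card (Z t) \<le> r" if t: "t < q" for t
  proof (rule ccontr)
    assume "\<not> card (Z t) \<le> r"
    then have c: "r + 1 \<le> card (Z t)" by simp
    have tq: "(t+1)*(r+1) \<le> q*(r+1)" using t by (intro mult_right_mono) auto
    also have "\<dots> \<le> N" unfolding q_def by (metis div_mult_mod_eq le_add1)
    finally have j: "t*(r+1) + r + 1 \<le> N" by (simp add: algebra_simps)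
    have "r + 1 \<le> vec_space.rank N (dft_mat N + B)"
    proof (rule rank_block[OF FB j _ c])
      show "Z t \<subseteq> {..<N}" unfolding Z_def by auto
      fix i b assume i: "i \<in> Z t" and b: "b \<le> r"
      then have "i < N" "t*(r+1)+b < N" using j unfolding Z_def by auto
      then show "(dft_mat N + B) $$ (i, t*(r+1)+b) = exp (2*pi*\<i>/of_nat N)^(i*(t*(r+1)+b))"
        using i b B unfolding Z_def by (simp add: dft_mat_def)
    qed
    then show False using rk by simp
  qed
  have Tcard: "N - r \<le> card (T t)" if t: "t < q" for t
  proof -
    have "{..<N} - Z t \<subseteq> fst ` T t"
    proof
      fix i assume "i \<in> {..<N} - Z t"
      then obtain b where b: "b \<le> r" "B $$ (i, t*(r+1)+b) \<noteq> 0" "i < N" unfolding Z_def by auto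
      have tq: "(t+1)*(r+1) \<le> q*(r+1)" using t by (intro mult_right_mono) auto
      also have "\<dots> \<le> N" unfolding q_def by (metis div_mult_mod_eq le_add1)
      finally have "t*(r+1)+b < N" using b by (simp add: algebra_simps)
      then have "(i, t*(r+1)+b) \<in> T t" using b unfolding T_def S_def by auto
      then show "i \<in> fst ` T t" by force
    qed
    moreover have "finite (T t)" by (rule finite_subset[OF _ finS]) (auto simp: T_def)
    ultimately have "card ({..<N} - Z t) \<le> card (T t)"
      using card_mono card_image_le order_trans by (metis finite_imageI)
    moreover have "card ({..<N} - Z t) = N - card (Z t)"
      by (subst card_Diff_subset) (auto simp: Z_def intro: finite_subset[of _ "{..<N}"])
    ultimately show ?thesis using Zcard[OF t] by simp
  qed
  have disj: "T t \<inter> T t' = {}" if "t \<noteq> t'" for t t'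
  proof (rule ccontr)
    assume "T t \<inter> T t' \<noteq> {}"
    then obtain i j where "(i,j) \<in> T t" "(i,j) \<in> T t'" by auto
    then have "j div (r+1) = t" "j div (r+1) = t'" unfolding T_def
      by (auto intro!: div_nat_eqI simp: algebra_simps)
    then show False using that by simp
  qed
  have "(\<Sum>t<q. card (T t)) = card (\<Union>t<q. T t)"
    by (rule card_UN_disjoint[symmetric]) (use finS disj in \<open>auto simp: T_def intro: finite_subset[OF _ finS]\<close>)
  also have "\<dots> \<le> card S" by (rule card_mono[OF finS]) (auto simp: T_def)
  finally have "(\<Sum>t<q. card (T t)) \<le> card S" .
  moreover have "q * (N - r) \<le> (\<Sum>t<q. card (T t))"
    using sum_mono[of "{..<q}" "\<lambda>_. N - r" "\<lambda>t. card (T t)"] Tcard by simp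
  ultimately show ?thesis unfolding q_def nnzS by simp
qed

theorem mainTheorem10:
  fixes N r :: nat
  assumes "r < N"
  shows "(real r + 1) * (real r + real (rigidity (dft_mat N) r) / real N) \<ge> real N"
proof -
  define P where "P k = (\<exists>B \<in> carrier_mat N N. nnz B = k \<and> vec_space.rank N (dft_mat N + B) \<le> r)" for k
  have dims: "dim_row (dft_mat N) = N" "dim_col (dft_mat N) = N" by (simp_all add: dft_mat_def)
  have rig: "rigidity (dft_mat N) r = (LEAST k. P k)" unfolding rigidity_def P_def dims ..
  have "P (nnz (- dft_mat N))"
  proof -
    have "dft_mat N + - dft_mat N = 0\<^sub>m N N" by (rule eq_matI) (simp_all add: dft_mat_def)
    then have "vec_space.rank N (dft_mat N + - dft_mat N) = 0" using vec_space.rank_0I by metis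
    then show ?thesis unfolding P_def by (intro bexI[of _ "- dft_mat N"]) (auto simp: dft_mat_def)
  qed
  then have "P (LEAST k. P k)" by (rule LeastI)
  then obtain B where B: "B \<in> carrier_mat N N" "nnz B = rigidity (dft_mat N) r"
    "vec_space.rank N (dft_mat N + B) \<le> r" unfolding P_def rig by blast
  have "(N div (r+1)) * (N - r) \<le> rigidity (dft_mat N) r" using nnz_bound[OF B(1) B(3)] B(2) by simp
  then show ?thesis by (rule arith_final[OF assms])
qed

end
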